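(* If $t\in[1,2]$, then $w(t,a)=w_1(t,a)$ and $w(t,a)/W(t,a)\le 2/3$ for all $a\in[(3t+2)/4,2]$.
   Context: For $(t,a)\in\mathbb R^2$ define $w_1(t,a)=(2t+3)a-(3t^2/4+t)$, $w_2(t,a)=(4t+4)a-(3t^2/2+2t+2)$, $w_3(t,a)=8ta-(3t^2+4t-4)$, $W(t,a)=[(t+2)a-(t^2/2+t)](t+2)$, and $w(t,a)=\min\{w_1(t,a),w_2(t,a),w_3(t,a)\}$. *)

theory Defs
  imports Complex_Main
begin

definition w1 :: "real \<Rightarrow> real \<Rightarrow> real" where
  "w1 t a = (2*t+3)*a - (3*t^2/4 + t)"
definition w2 :: "real \<Rightarrow> real \<Rightarrow> real" where
  "w2 t a = (4*t+4)*a - (3*t^2/2 + 2*t + 2)"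
definition w3 :: "real \<Rightarrow> real \<Rightarrow> real" where
  "w3 t a = 8*t*a - (3*t^2 + 4*t - 4)"
definition WW :: "real \<Rightarrow> real \<Rightarrow> real" where
  "WW t a = ((t+2)*a - (t^2/2 + t)) * (t+2)"
definition w :: "real \<Rightarrow> real \<Rightarrow> real" where
  "w t a = min (w1 t a) (min (w2 t a) (w3 t a))"

end

theory Submission
  imports Defs
begin

theorem lemmaA6:
  fixes t :: real
  assumes "1 \<le> t" and "t \<le> 2"
  shows "\<forall>a \<in> {(3*t+2)/4 .. 2}. w t a = w1 t a \<and> w t a / WW t a \<le> 2/3"
proof
  fix a assume "a \<in> {(3*t+2)/4 .. 2}"
  hence a1: "(3*t+2)/4 \<le> a" and a2: "a \<le> 2" by auto
  have p1: "0 \<le> (2*t+1) * (a - (3*t+2)/4)" using assms a1 by simp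
  have p2: "0 \<le> (6*t-3) * (a - (3*t+2)/4)" using assms a1 by simp
  have p3: "0 \<le> (t+2) * (a - (3*t+2)/4)" using assms a1 by simp
  have s1: "0 \<le> (t-1)*(t+2)" using assms by simp
  have s2: "0 \<le> (t-1)*(t-1)" by simp
  have s3: "0 \<le> (t+2)*(2*t+1)*(t-1)" using assms by simp
  have s4: "0 \<le> (a - (3*t+2)/4) * (2*t*t+2*t-1)"
  proof -
    have "2*t*t \<ge> 2*t" using assms by simp
    hence "2*t*t+2*t-1 \<ge> 0" using assms by linarith
    thus ?thesis using a1 by (intro mult_nonneg_nonneg) auto
  qed
  have e1: "w1 t a \<le> w2 t a" using p1 s1 unfolding w1_def w2_def
    by (simp add: power2_eq_square field_simps; smt (verit))
  have e2: "w1 t a \<le> w3 t a" using p2 s2 assms unfolding w1_def w3_def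
    by (simp add: power2_eq_square field_simps; smt (verit))
  have ww: "w t a = w1 t a" using e1 e2 unfolding w_def by simp
  have s5: "0 < (t+2)*(t+2)" using assms by simp
  have Wi: "(t+2)*a - (t^2/2+t) > 0" using p3 s5 assms
    by (simp add: power2_eq_square field_simps; smt (verit))
  have Wpos: "WW t a > 0" unfolding WW_def using Wi assms by simp
  have "3 * w1 t a \<le> 2 * WW t a"
    using s3 s4 unfolding w1_def WW_def
    by (simp add: power2_eq_square field_simps; smt (verit))
  thus "w t a = w1 t a \<and> w t a / WW t a \<le> 2/3" using ww Wpos
    by (simp add: divide_le_eq)
qed

end
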